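(* Let $N,M,r$ be positive integers and let $\xi^{1},\dots,\xi^{M}\in\{-1,+1\}^{N}$ be memory-vectors such that the Hamming distance between any two distinct memory-vectors is at least $\tau N$ for some $\tau>0$. Let $0<\rho<\frac{\tau}{2}$ and suppose $$M\le \exp\big(2N(\tau-2\rho)\big)\,\frac{1-e^{-2}}{2e^{2}}.$$ Let $E_{\mathrm{rand}}$ be the compact associative memory energy defined in the context (built from $r$ i.i.d. Gaussian random features $\omega_1,\dots,\omega_r\sim\mathcal N(0,\mathbf I_N)$ via the map $\phi_{F++}$ with any parameter $s\in(0,1)$). Then for every $l\in\{1,\dots,M\}$, every input $\widehat{\xi}^{l}\in\{-1,+1\}^N$ at Hamming distance at most $\rho N$ from $\xi^{l}$, and every coordinate $i\in\{1,\dots,N\}$, letting $\tilde{\xi}^{l}$ denote $\widehat{\xi}^{l}$ with its $i$-th coordinate negated and $\Delta(E_{\mathrm{rand}})=E_{\mathrm{rand}}(\tilde{\xi}^{l};\xi^1,\dots,\xi^M)-E_{\mathrm{rand}}(\widehat{\xi}^{l};\xi^1,\dots,\xi^M)$, the following holds: if $\widehat{\xi}^{l}_i=\xi^{l}_i$ (so the flip increases the Hamming distance to $\xi^l$) then $\mathbb{E}[\Delta(E_{\mathrm{rand}})]>0$, and if $\widehat{\xi}^{l}_i=-\xi^{l}_i$ (so the flip decreases the distance to $\xi^l$) then $\mathbb{E}[\Delta(E_{\mathrm{rand}})]<0$, where the expectation is over $\omega_1,\dots,\omega_r$.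
   Context: FAVOR++ random features: fix a parameter $s\in(0,1)$ and set $A=1-\frac{1}{s}$, $\widehat A=-A>0$, $B=\sqrt{1+4\widehat A}$, $C=-\frac12$, $D=(1+4\widehat A)^{N/4}$. For i.i.d. $\omega_1,\dots,\omega_r\sim\mathcal N(0,\mathbf I_N)$ define $\phi_{F++}:\mathbb R^N\to\mathbb R^r$ by $$\phi_{F++}(\mathbf z)=\frac{D}{\sqrt r}\Big(\exp\big(-\widehat A\|\omega_k\|_2^2+B\,\omega_k^\top\mathbf z+C\|\mathbf z\|_2^2\big)\Big)_{k=1}^{r}.$$ (This gives an unbiased estimator of the softmax kernel: $\mathbb E[\phi_{F++}(\mathbf x)^\top\phi_{F++}(\mathbf y)]=\exp(\mathbf x^\top\mathbf y)$.) The compact associative memory energy of an input $\xi\in\{-1,+1\}^N$ given memories $\xi^1,\dots,\xi^M$ is $$E_{\mathrm{rand}}(\xi;\xi^1,\dots,\xi^M)=\phi_{F++}(\xi)^\top\mathbf M,\qquad \mathbf M=-\sum_{\mu=1}^{M}\phi_{F++}(\xi^{\mu}),$$ with the same random vectors $\omega_k$ used throughout. *)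

theory Defs
  imports "HOL-Probability.Probability"
begin

text \<open>Vectors in R^N / {-1,+1}^N are represented as functions nat => real,
  only the coordinates 0..N-1 matter. The r random vectors omega_1..omega_r are
  packed into one function omega :: nat * nat => real, omega(k,j) = j-th coordinate
  of omega_k, k < r, j < N.\<close>

definition pm1_vec :: "nat \<Rightarrow> (nat \<Rightarrow> real) \<Rightarrow> bool" where
  "pm1_vec N x \<longleftrightarrow> (\<forall>i<N. x i = 1 \<or> x i = -1)"

definition hamming :: "nat \<Rightarrow> (nat \<Rightarrow> real) \<Rightarrow> (nat \<Rightarrow> real) \<Rightarrow> nat" where
  "hamming N x y = card {i\<in>{..<N}. x i \<noteq> y i}"

definition phi_Fpp :: "real \<Rightarrow> nat \<Rightarrow> nat \<Rightarrow> (nat \<times> nat \<Rightarrow> real) \<Rightarrow> (nat \<Rightarrow> real) \<Rightarrow> nat \<Rightarrow> real" where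
  "phi_Fpp s N r \<omega> z k =
     (let A = 1 - 1 / s; Ahat = - A; B = sqrt (1 + 4 * Ahat); C = - 1 / 2;
          D = (1 + 4 * Ahat) powr (real N / 4)
      in D / sqrt (real r) *
         exp (- Ahat * (\<Sum>j<N. (\<omega> (k, j))\<^sup>2) + B * (\<Sum>j<N. \<omega> (k, j) * z j)
              + C * (\<Sum>j<N. (z j)\<^sup>2)))"

definition E_rand :: "real \<Rightarrow> nat \<Rightarrow> nat \<Rightarrow> (nat \<times> nat \<Rightarrow> real) \<Rightarrow> nat \<Rightarrow> (nat \<Rightarrow> nat \<Rightarrow> real)
                        \<Rightarrow> (nat \<Rightarrow> real) \<Rightarrow> real" where
  "E_rand s N r \<omega> M \<xi> x =
     (\<Sum>k<r. phi_Fpp s N r \<omega> x k * (- (\<Sum>\<mu>\<in>{1..M}. phi_Fpp s N r \<omega> (\<xi> \<mu>) k)))"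

definition gauss_features :: "nat \<Rightarrow> nat \<Rightarrow> (nat \<times> nat \<Rightarrow> real) measure" where
  "gauss_features N r = PiM ({..<r} \<times> {..<N}) (\<lambda>_. std_normal_distribution)"

end

theory Submission
  imports Defs
begin

lemma gauss1d:
  fixes c b :: real assumes c: "c > 0"
  shows "has_bochner_integral std_normal_distribution (\<lambda>x. exp (-((c-1)/2) * x^2 + b * x)) (exp (b^2/(2*c)) / sqrt c)"
proof -
  define K where "K = exp (b^2/(2*c)) / sqrt c"
  have eq: "std_normal_density x *\<^sub>R exp (-((c-1)/2) * x^2 + b*x) = K * normal_density (b/c) (1/sqrt c) x" for x
  proof -
    have s1: "sqrt (2 * pi * (1 / sqrt c)\<^sup>2) = sqrt (2*pi) / sqrt c"
      using c by (simp add: real_sqrt_divide power_divide)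
    have e1: "-(x - b/c)\<^sup>2 / (2 * (1 / sqrt c)\<^sup>2) = -c*x^2/2 + b*x - b^2/(2*c)"
      using c by (simp add: power_divide field_simps power2_eq_square)
    have "K * normal_density (b/c) (1/sqrt c) x = exp (b^2/(2*c)) / sqrt c * (sqrt c / sqrt (2*pi)) * exp (-c*x^2/2 + b*x - b^2/(2*c))"
      unfolding K_def normal_density_def s1 e1 by simp
    also have "\<dots> = 1 / sqrt (2*pi) * (exp (b^2/(2*c)) * exp (-c*x^2/2 + b*x - b^2/(2*c)))"
      using c by simp
    also have "\<dots> = 1 / sqrt (2*pi) * exp (-c*x^2/2 + b*x)"
      by (simp add: exp_add[symmetric])
    also have "\<dots> = 1 / sqrt (2*pi) * (exp (- x\<^sup>2 / 2) * exp (-((c-1)/2) * x^2 + b*x))"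
      by (simp add: exp_add[symmetric] field_simps)
    finally show ?thesis by (simp add: std_normal_density_def)
  qed
  have "has_bochner_integral lborel (\<lambda>x. K * normal_density (b/c) (1/sqrt c) x) (K * 1)"
    by (intro has_bochner_integral_mult_right) (use c in \<open>simp add: has_bochner_integral_iff integrable_normal_density integral_normal_density\<close>)
  then have "has_bochner_integral lborel (\<lambda>x. std_normal_density x *\<^sub>R exp (-((c-1)/2) * x^2 + b*x)) K"
    by (simp only: eq mult_1_right)
  then show ?thesis unfolding K_def[symmetric]
    by (intro has_bochner_integral_density) auto
qed

lemma prod_single_row:
  fixes g :: "nat \<Rightarrow> real" and k r N :: nat
  assumes "k < r"
  shows "(\<Prod>p\<in>{..<r}\<times>{..<N}. (if fst p = k then g (snd p) else 1)) = (\<Prod>j<N. g j)"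
proof -
  have "(\<Prod>p\<in>{..<r}\<times>{..<N}. (if fst p = k then g (snd p) else 1)) =
        (\<Prod>k'<r. \<Prod>j<N. (if k' = k then g j else 1))"
    by (simp add: prod.cartesian_product case_prod_beta)
  also have "\<dots> = (\<Prod>k'<r. if k' = k then (\<Prod>j<N. g j) else 1)"
    by (intro prod.cong) auto
  also have "\<dots> = (\<Prod>j<N. g j)"
    by (subst prod.delta) (use assms in auto)
  finally show ?thesis .
qed

lemma gauss_prod:
  fixes c :: real and u :: "nat \<Rightarrow> real"
  assumes c: "c > 0" and k: "k < r"
  shows "has_bochner_integral (gauss_features N r)
     (\<lambda>\<omega>. \<Prod>j<N. exp (-((c-1)/2) * (\<omega> (k,j))^2 + (sqrt c * u j) * \<omega> (k,j)))
     (\<Prod>j<N. exp ((sqrt c * u j)^2/(2*c)) / sqrt c)"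
proof -
  define F where "F = (\<lambda>p::nat\<times>nat. if fst p = k then (\<lambda>t. exp (-((c-1)/2)*t^2 + (sqrt c * u (snd p)) * t)) else (\<lambda>_. 1::real))"
  interpret P: product_sigma_finite "\<lambda>_::nat\<times>nat. std_normal_distribution"
    by (simp add: product_sigma_finite_def prob_space_normal_density prob_space_imp_sigma_finite)
  have int: "integrable std_normal_distribution (F p)" for p
  proof (cases "fst p = k")
    case True
    then show ?thesis using gauss1d[OF c, of "sqrt c * u (snd p)", unfolded has_bochner_integral_iff] by (simp add: F_def)
  next
    case False
    interpret prob_space std_normal_distribution by (rule prob_space_normal_density) simp
    show ?thesis unfolding F_def using False by simp
  qed
  have intv: "integral\<^sup>L std_normal_distribution (F p) = (if fst p = k then exp ((sqrt c * u (snd p))^2/(2*c)) / sqrt c else 1)" for p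
  proof (cases "fst p = k")
    case True
    then show ?thesis using gauss1d[OF c, of "sqrt c * u (snd p)", unfolded has_bochner_integral_iff] by (simp add: F_def)
  next
    case False
    interpret prob_space std_normal_distribution by (rule prob_space_normal_density) simp
    show ?thesis unfolding F_def using False prob_space by simp
  qed
  have fin: "finite ({..<r}\<times>{..<N})" by simp
  have "has_bochner_integral (PiM ({..<r}\<times>{..<N}) (\<lambda>_. std_normal_distribution))
     (\<lambda>\<omega>. \<Prod>p\<in>{..<r}\<times>{..<N}. F p (\<omega> p))
     (\<Prod>p\<in>{..<r}\<times>{..<N}. integral\<^sup>L std_normal_distribution (F p))"
    using P.product_integral_prod[OF fin int] P.product_integrable_prod[OF fin int]
    by (simp add: has_bochner_integral_iff)
  moreover have "(\<lambda>\<omega>. \<Prod>p\<in>{..<r}\<times>{..<N}. F p (\<omega> p)) =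
     (\<lambda>\<omega>. \<Prod>j<N. exp (-((c-1)/2) * (\<omega> (k,j))^2 + (sqrt c * u j) * \<omega> (k,j)))"
  proof
    fix \<omega> :: "nat\<times>nat \<Rightarrow> real"
    have "(\<Prod>p\<in>{..<r}\<times>{..<N}. F p (\<omega> p)) = (\<Prod>p\<in>{..<r}\<times>{..<N}. (if fst p = k then
        exp (-((c-1)/2) * (\<omega> (k,snd p))^2 + (sqrt c * u (snd p)) * \<omega> (k,snd p)) else 1))"
      by (intro prod.cong) (auto simp: F_def)
    also have "\<dots> = (\<Prod>j<N. exp (-((c-1)/2) * (\<omega> (k,j))^2 + (sqrt c * u j) * \<omega> (k,j)))"
      by (rule prod_single_row[OF k])
    finally show "(\<Prod>p\<in>{..<r}\<times>{..<N}. F p (\<omega> p)) = (\<Prod>j<N. exp (-((c-1)/2) * (\<omega> (k,j))^2 + (sqrt c * u j) * \<omega> (k,j)))" .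
  qed
  moreover have "(\<Prod>p\<in>{..<r}\<times>{..<N}. integral\<^sup>L std_normal_distribution (F p)) = (\<Prod>j<N. exp ((sqrt c * u j)^2/(2*c)) / sqrt c)"
    unfolding intv by (rule prod_single_row[OF k])
  ultimately show ?thesis unfolding gauss_features_def by simp
qed

lemma exp_pair_aux: "(a::real) / b * exp e1 * (a / b * exp e2) = a * a / (b * b) * exp (e1 + e2)"
  by (simp add: exp_add)

lemma phi_pair:
  fixes x y :: "nat \<Rightarrow> real"
  assumes s: "0 < s" "s < 1" and k: "k < r"
  shows "has_bochner_integral (gauss_features N r)
     (\<lambda>\<omega>. phi_Fpp s N r \<omega> x k * phi_Fpp s N r \<omega> y k) (exp (\<Sum>j<N. x j * y j) / real r)"
proof -
  define c where "c = 1 + 4 * (- (1 - 1 / s))"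
  have c1: "c > 1" using s unfolding c_def by (simp add: field_simps)
  hence c0: "c > 0" by simp
  define D where "D = c powr (real N / 4)"
  define K where "K = D * D / real r * exp (- (\<Sum>j<N. (x j)\<^sup>2) / 2 - (\<Sum>j<N. (y j)\<^sup>2) / 2)"
  define u where "u = (\<lambda>j. x j + y j)"
  have r0: "real r > 0" using k by simp
  have eqf: "phi_Fpp s N r \<omega> x k * phi_Fpp s N r \<omega> y k =
     K * (\<Prod>j<N. exp (-((c-1)/2) * (\<omega> (k,j))^2 + (sqrt c * u j) * \<omega> (k,j)))" for \<omega>
  proof -
    have ahat: "- (- (1 - 1 / s)) = - ((c - 1) / 4)" unfolding c_def by (simp add: field_simps)
    have "phi_Fpp s N r \<omega> x k * phi_Fpp s N r \<omega> y k =
      D / sqrt (real r) * exp (- ((c - 1) / 4) * (\<Sum>j<N. (\<omega> (k, j))\<^sup>2) + sqrt c * (\<Sum>j<N. \<omega> (k, j) * x j) + - 1 / 2 * (\<Sum>j<N. (x j)\<^sup>2)) *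
      (D / sqrt (real r) * exp (- ((c - 1) / 4) * (\<Sum>j<N. (\<omega> (k, j))\<^sup>2) + sqrt c * (\<Sum>j<N. \<omega> (k, j) * y j) + - 1 / 2 * (\<Sum>j<N. (y j)\<^sup>2)))"
      unfolding phi_Fpp_def Let_def c_def[symmetric] D_def[symmetric] ahat ..
    also have "\<dots> = K * exp (\<Sum>j<N. (-((c-1)/2) * (\<omega> (k,j))^2 + (sqrt c * u j) * \<omega> (k,j)))"
    proof -
      have sq: "sqrt (real r) * sqrt (real r) = real r" using r0 by simp
      have ss: "(\<Sum>j<N. (-((c-1)/2) * (\<omega> (k,j))^2 + (sqrt c * u j) * \<omega> (k,j))) =
         -((c-1)/2) * (\<Sum>j<N. (\<omega> (k,j))^2) + sqrt c * (\<Sum>j<N. \<omega> (k, j) * x j) + sqrt c * (\<Sum>j<N. \<omega> (k, j) * y j)"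
      proof -
        have "(\<Sum>j<N. (-((c-1)/2) * (\<omega> (k,j))^2 + (sqrt c * u j) * \<omega> (k,j))) =
          (\<Sum>j<N. -((c-1)/2) * (\<omega> (k,j))^2) + (\<Sum>j<N. sqrt c * (\<omega> (k, j) * x j)) + (\<Sum>j<N. sqrt c * (\<omega> (k, j) * y j))"
          by (simp add: sum.distrib[symmetric] u_def algebra_simps)
        then show ?thesis by (simp add: sum_distrib_left[symmetric] sum_negf sum_divide_distrib[symmetric])
      qed
      have "D / sqrt (real r) * exp (- ((c - 1) / 4) * (\<Sum>j<N. (\<omega> (k, j))\<^sup>2) + sqrt c * (\<Sum>j<N. \<omega> (k, j) * x j) + - 1 / 2 * (\<Sum>j<N. (x j)\<^sup>2)) *
      (D / sqrt (real r) * exp (- ((c - 1) / 4) * (\<Sum>j<N. (\<omega> (k, j))\<^sup>2) + sqrt c * (\<Sum>j<N. \<omega> (k, j) * y j) + - 1 / 2 * (\<Sum>j<N. (y j)\<^sup>2)))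
        = D * D / (sqrt (real r) * sqrt (real r)) * exp ((- ((c - 1) / 4) * (\<Sum>j<N. (\<omega> (k, j))\<^sup>2) + sqrt c * (\<Sum>j<N. \<omega> (k, j) * x j) + - 1 / 2 * (\<Sum>j<N. (x j)\<^sup>2)) +
          (- ((c - 1) / 4) * (\<Sum>j<N. (\<omega> (k, j))\<^sup>2) + sqrt c * (\<Sum>j<N. \<omega> (k, j) * y j) + - 1 / 2 * (\<Sum>j<N. (y j)\<^sup>2)))"
        by (rule exp_pair_aux)
      also have "\<dots> = D * D / real r * exp ((- (\<Sum>j<N. (x j)\<^sup>2) / 2 - (\<Sum>j<N. (y j)\<^sup>2) / 2) + (\<Sum>j<N. (-((c-1)/2) * (\<omega> (k,j))^2 + (sqrt c * u j) * \<omega> (k,j))))"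
        unfolding sq ss by (simp add: algebra_simps, simp add: field_simps)
      also have "\<dots> = K * exp (\<Sum>j<N. (-((c-1)/2) * (\<omega> (k,j))^2 + (sqrt c * u j) * \<omega> (k,j)))"
        unfolding K_def by (simp add: exp_add)
      finally show ?thesis .
    qed
    also have "\<dots> = K * (\<Prod>j<N. exp (-((c-1)/2) * (\<omega> (k,j))^2 + (sqrt c * u j) * \<omega> (k,j)))"
      by (simp add: exp_sum)
    finally show ?thesis .
  qed
  have "has_bochner_integral (gauss_features N r)
     (\<lambda>\<omega>. K * (\<Prod>j<N. exp (-((c-1)/2) * (\<omega> (k,j))^2 + (sqrt c * u j) * \<omega> (k,j))))
     (K * (\<Prod>j<N. exp ((sqrt c * u j)^2/(2*c)) / sqrt c))"
    by (intro has_bochner_integral_mult_right gauss_prod c0 k)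
  moreover have "K * (\<Prod>j<N. exp ((sqrt c * u j)^2/(2*c)) / sqrt c) = exp (\<Sum>j<N. x j * y j) / real r"
  proof -
    have p1: "(\<Prod>j<N. exp ((sqrt c * u j)^2/(2*c)) / sqrt c) = exp (\<Sum>j<N. (u j)^2/2) / (sqrt c)^N"
      using c0 by (simp add: prod_dividef exp_sum power_mult_distrib)
    have dd: "D * D = (sqrt c)^N"
      unfolding D_def using c0
      by (simp add: powr_add[symmetric] sqrt_def root_powr_inverse powr_realpow[symmetric] powr_powr)
    have "K * (exp (\<Sum>j<N. (u j)^2/2) / (sqrt c)^N) = exp (- (\<Sum>j<N. (x j)\<^sup>2) / 2 - (\<Sum>j<N. (y j)\<^sup>2) / 2) * exp (\<Sum>j<N. (u j)^2/2) / real r"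
      unfolding K_def dd using c0 by simp
    also have "\<dots> = exp (\<Sum>j<N. x j * y j) / real r"
    proof -
      have "- (\<Sum>j<N. (x j)\<^sup>2) / 2 - (\<Sum>j<N. (y j)\<^sup>2) / 2 + (\<Sum>j<N. (u j)^2/2) = (\<Sum>j<N. x j * y j)"
      proof -
        have "(\<Sum>j<N. (u j)^2/2) = (\<Sum>j<N. (x j)\<^sup>2) / 2 + (\<Sum>j<N. (y j)\<^sup>2) / 2 + (\<Sum>j<N. x j * y j)"
          by (simp add: u_def power2_eq_square algebra_simps add_divide_distrib sum.distrib sum_divide_distrib)
        then show ?thesis by simp
      qed
      then show ?thesis by (simp add: exp_add[symmetric])
    qed
    finally show ?thesis using p1 by simp
  qed
  ultimately show ?thesis by (simp add: eqf)
qed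

lemma E_rand_int:
  assumes s: "0 < s" "s < 1" and r: "r > 0"
  shows "has_bochner_integral (gauss_features N r) (\<lambda>\<omega>. E_rand s N r \<omega> M \<xi> x)
           (- (\<Sum>\<mu>\<in>{1..M}. exp (\<Sum>j<N. x j * \<xi> \<mu> j)))"
proof -
  have "has_bochner_integral (gauss_features N r)
     (\<lambda>\<omega>. - (\<Sum>k<r. \<Sum>\<mu>\<in>{1..M}. phi_Fpp s N r \<omega> x k * phi_Fpp s N r \<omega> (\<xi> \<mu>) k))
     (- (\<Sum>k<r. \<Sum>\<mu>\<in>{1..M}. exp (\<Sum>j<N. x j * \<xi> \<mu> j) / real r))"
    by (intro has_bochner_integral_minus has_bochner_integral_sum phi_pair s) auto
  moreover have "(\<Sum>k<r. \<Sum>\<mu>\<in>{1..M}. exp (\<Sum>j<N. x j * \<xi> \<mu> j) / real r) = (\<Sum>\<mu>\<in>{1..M}. exp (\<Sum>j<N. x j * \<xi> \<mu> j))"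
    using r by (simp add: sum_divide_distrib[symmetric])
  moreover have "E_rand s N r \<omega> M \<xi> x = - (\<Sum>k<r. \<Sum>\<mu>\<in>{1..M}. phi_Fpp s N r \<omega> x k * phi_Fpp s N r \<omega> (\<xi> \<mu>) k)" for \<omega>
    unfolding E_rand_def by (simp add: sum_distrib_left sum_negf)
  ultimately show ?thesis by simp
qed

lemma dot_hamming:
  assumes "pm1_vec N x" "pm1_vec N y"
  shows "(\<Sum>j<N. x j * y j) = real N - 2 * real (hamming N x y)"
proof -
  have "(\<Sum>j<N. x j * y j) = (\<Sum>j<N. 1 - 2 * (if x j \<noteq> y j then 1 else 0))"
  proof (intro sum.cong refl)
    fix j assume "j \<in> {..<N}"
    then have "x j = 1 \<or> x j = -1" "y j = 1 \<or> y j = -1" using assms unfolding pm1_vec_def by auto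
    then show "x j * y j = 1 - 2 * (if x j \<noteq> y j then 1 else 0)" by auto
  qed
  also have "\<dots> = real N - 2 * (\<Sum>j<N. (if x j \<noteq> y j then 1 else 0))"
    by (simp add: sum_subtractf sum_distrib_left)
  also have "(\<Sum>j<N. (if x j \<noteq> y j then 1 else 0)) = real (hamming N x y)"
    unfolding hamming_def by (simp add: sum.If_cases Int_def conj_commute)
  finally show ?thesis .
qed

lemma hamming_sym: "hamming N x y = hamming N y x"
  unfolding hamming_def by (metis (mono_tags, lifting))

lemma hamming_tri: "hamming N x z \<le> hamming N x y + hamming N y z"
proof -
  have "{i\<in>{..<N}. x i \<noteq> z i} \<subseteq> {i\<in>{..<N}. x i \<noteq> y i} \<union> {i\<in>{..<N}. y i \<noteq> z i}" by auto
  then have "card {i\<in>{..<N}. x i \<noteq> z i} \<le> card ({i\<in>{..<N}. x i \<noteq> y i} \<union> {i\<in>{..<N}. y i \<noteq> z i})"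
    by (intro card_mono) auto
  also have "\<dots> \<le> card {i\<in>{..<N}. x i \<noteq> y i} + card {i\<in>{..<N}. y i \<noteq> z i}"
    by (rule card_Un_le)
  finally show ?thesis unfolding hamming_def .
qed

theorem theorem1:
  fixes N M r :: nat and \<xi> :: "nat \<Rightarrow> nat \<Rightarrow> real" and \<tau> \<rho> s :: real
    and l i :: nat and \<xi>hat :: "nat \<Rightarrow> real"
  assumes "N > 0" and "M > 0" and "r > 0"
    and "\<forall>\<mu>\<in>{1..M}. pm1_vec N (\<xi> \<mu>)"
    and "\<tau> > 0"
    and "\<forall>\<mu>\<in>{1..M}. \<forall>\<nu>\<in>{1..M}. \<mu> \<noteq> \<nu> \<longrightarrow> real (hamming N (\<xi> \<mu>) (\<xi> \<nu>)) \<ge> \<tau> * real N"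
    and "0 < \<rho>" and "\<rho> < \<tau> / 2"
    and "real M \<le> exp (2 * real N * (\<tau> - 2 * \<rho>)) * (1 - exp (-2)) / (2 * exp 2)"
    and "0 < s" and "s < 1"
    and "l \<in> {1..M}" and "pm1_vec N \<xi>hat"
    and "real (hamming N \<xi>hat (\<xi> l)) \<le> \<rho> * real N"
    and "i < N"
  shows "let \<xi>tilde = \<xi>hat(i := - \<xi>hat i);
             ExpDelta = (\<integral>\<omega>. E_rand s N r \<omega> M \<xi> \<xi>tilde - E_rand s N r \<omega> M \<xi> \<xi>hat
                           \<partial>gauss_features N r)
         in (\<xi>hat i = \<xi> l i \<longrightarrow> ExpDelta > 0) \<and> (\<xi>hat i = - \<xi> l i \<longrightarrow> ExpDelta < 0)"
proof -
  note a = assms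
  define d where "d \<mu> = (\<Sum>j<N. \<xi>hat j * \<xi> \<mu> j)" for \<mu>
  define e where "e \<mu> = \<xi>hat i * \<xi> \<mu> i" for \<mu>
  define xt where "xt = \<xi>hat(i := - \<xi>hat i)"
  define T where "T \<mu> = exp (d \<mu>) - exp (d \<mu> - 2 * e \<mu>)" for \<mu>
  have dt: "(\<Sum>j<N. xt j * \<xi> \<mu> j) = d \<mu> - 2 * e \<mu>" for \<mu>
  proof -
    have "(\<Sum>j<N. xt j * \<xi> \<mu> j) = (\<Sum>j<N. \<xi>hat j * \<xi> \<mu> j - (if j = i then 2 * e \<mu> else 0))"
      by (intro sum.cong refl) (auto simp: xt_def e_def)
    also have "\<dots> = d \<mu> - 2 * e \<mu>"
      using a(15) by (simp add: sum_subtractf d_def)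
    finally show ?thesis .
  qed
  have ED: "(\<integral>\<omega>. E_rand s N r \<omega> M \<xi> xt - E_rand s N r \<omega> M \<xi> \<xi>hat \<partial>gauss_features N r) = (\<Sum>\<mu>\<in>{1..M}. T \<mu>)"
  proof -
    have "has_bochner_integral (gauss_features N r) (\<lambda>\<omega>. E_rand s N r \<omega> M \<xi> xt - E_rand s N r \<omega> M \<xi> \<xi>hat)
      (- (\<Sum>\<mu>\<in>{1..M}. exp (\<Sum>j<N. xt j * \<xi> \<mu> j)) - - (\<Sum>\<mu>\<in>{1..M}. exp (\<Sum>j<N. \<xi>hat j * \<xi> \<mu> j)))"
      by (intro has_bochner_integral_diff E_rand_int a)
    then have "(\<integral>\<omega>. E_rand s N r \<omega> M \<xi> xt - E_rand s N r \<omega> M \<xi> \<xi>hat \<partial>gauss_features N r) =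
       (- (\<Sum>\<mu>\<in>{1..M}. exp (\<Sum>j<N. xt j * \<xi> \<mu> j)) - - (\<Sum>\<mu>\<in>{1..M}. exp (\<Sum>j<N. \<xi>hat j * \<xi> \<mu> j)))"
      by (rule has_bochner_integral_integral_eq)
    also have "\<dots> = (\<Sum>\<mu>\<in>{1..M}. T \<mu>)"
      unfolding dt T_def d_def[symmetric] by (simp add: sum_subtractf)
    finally show ?thesis .
  qed
  have pmh: "\<xi>hat i = 1 \<or> \<xi>hat i = -1" using a(13,15) unfolding pm1_vec_def by auto
  have pmx: "\<xi> \<mu> i = 1 \<or> \<xi> \<mu> i = -1" if "\<mu> \<in> {1..M}" for \<mu>
    using a(4,15) that unfolding pm1_vec_def by auto
  have e_pm: "e \<mu> = 1 \<or> e \<mu> = -1" if "\<mu> \<in> {1..M}" for \<mu>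
    using pmh pmx[OF that] unfolding e_def by auto
  have dl: "d l \<ge> real N - 2 * \<rho> * real N"
    using dot_hamming[OF a(13) bspec[OF a(4) a(12)]] a(14) unfolding d_def by simp
  have dmu: "d \<mu> \<le> real N - 2 * (\<tau> - \<rho>) * real N" if "\<mu> \<in> {1..M}" "\<mu> \<noteq> l" for \<mu>
  proof -
    have "real (hamming N (\<xi> l) (\<xi> \<mu>)) \<ge> \<tau> * real N" using a(6) a(12) that by auto
    moreover have "hamming N (\<xi> l) (\<xi> \<mu>) \<le> hamming N (\<xi> l) \<xi>hat + hamming N \<xi>hat (\<xi> \<mu>)"
      by (rule hamming_tri)
    moreover have "hamming N (\<xi> l) \<xi>hat = hamming N \<xi>hat (\<xi> l)" by (rule hamming_sym)
    ultimately have "real (hamming N \<xi>hat (\<xi> \<mu>)) \<ge> \<tau> * real N - \<rho> * real N"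
      using a(14) by linarith
    then show ?thesis
      using dot_hamming[OF a(13) bspec[OF a(4) that(1)]] unfolding d_def by (simp add: algebra_simps)
  qed
  define bnd where "bnd = exp (real N - 2 * (\<tau> - \<rho>) * real N) * (exp 2 - 1)"
  have e2: "exp (2::real) \<ge> 3" using exp_ge_add_one_self[of 2] by simp
  have em2: "exp (-2::real) < 1" by simp
  have em2p: "exp (-2::real) > 0" by simp
  have ee: "exp (2::real) * exp (-2) = 1" by (simp add: exp_add[symmetric])
  have Tb: "\<bar>T \<mu>\<bar> \<le> bnd" if "\<mu> \<in> {1..M}" "\<mu> \<noteq> l" for \<mu>
  proof -
    have "\<bar>T \<mu>\<bar> \<le> exp (d \<mu>) * (exp 2 - 1)"
    proof (cases "e \<mu> = 1")
      case True
      then have "T \<mu> = exp (d \<mu>) * (1 - exp (-2))" unfolding T_def by (simp add: exp_diff exp_minus field_simps)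
      moreover have "0 \<le> 1 - exp (-2::real)" "1 - exp (-2::real) \<le> exp 2 - 1" using em2 em2p e2 by linarith+
      ultimately show ?thesis by (simp add: abs_mult)
    next
      case False
      then have "e \<mu> = -1" using e_pm[OF that(1)] by auto
      then have "T \<mu> = - (exp (d \<mu>) * (exp 2 - 1))" unfolding T_def by (simp add: exp_add algebra_simps)
      moreover have "0 \<le> exp 2 - (1::real)" using e2 by simp
      ultimately show ?thesis by (simp add: abs_mult)
    qed
    also have "\<dots> \<le> bnd" unfolding bnd_def using dmu[OF that] e2 by (intro mult_right_mono) auto
    finally show ?thesis .
  qed
  define X where "X = exp (2 * real N * (\<tau> - 2 * \<rho>))"
  have Xpos: "X > 0" unfolding X_def by simp
  have M1: "real M \<ge> 1" using a(2) by simp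
  have key: "(real M - 1) * bnd < exp (real N - 2 * \<rho> * real N) * (1 - exp (-2))"
  proof -
    have "real M * exp 2 \<le> X * (1 - exp (-2)) / 2"
      using a(9) unfolding X_def by (simp add: field_simps)
    also have "\<dots> < X"
    proof -
      have "X * exp (-2) > 0" using Xpos by simp
      then show ?thesis using Xpos by (simp add: field_simps; linarith)
    qed
    finally have k0: "real M * exp 2 < X" .
    have k1: "(real M - 1) * exp 2 = real M * exp 2 - exp 2" by (simp add: algebra_simps)
    have k2: "exp (2::real) > 0" by simp
    from k0 k1 k2 have "(real M - 1) * exp 2 < X" by linarith
    then have s2: "(real M - 1) * exp 2 * (exp (real N - 2 * (\<tau> - \<rho>) * real N) * (1 - exp (-2))) < X * (exp (real N - 2 * (\<tau> - \<rho>) * real N) * (1 - exp (-2)))"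
      using em2 by (intro mult_strict_right_mono) auto
    have s1: "(real M - 1) * bnd = (real M - 1) * exp 2 * (exp (real N - 2 * (\<tau> - \<rho>) * real N) * (1 - exp (-2)))"
    proof -
      have h: "exp 2 - (1::real) = exp 2 * (1 - exp (-2))" using ee by (simp add: right_diff_distrib)
      show ?thesis unfolding bnd_def h by (simp only: mult_ac)
    qed
    have s3: "X * exp (real N - 2 * (\<tau> - \<rho>) * real N) = exp (real N - 2 * \<rho> * real N)"
      unfolding X_def by (simp add: exp_add[symmetric] algebra_simps)
    have "(real M - 1) * bnd < X * (exp (real N - 2 * (\<tau> - \<rho>) * real N) * (1 - exp (-2)))"
      unfolding s1 by (rule s2)
    also have "\<dots> = exp (real N - 2 * \<rho> * real N) * (1 - exp (-2))"
      by (simp only: mult.assoc[symmetric] s3)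
    finally show ?thesis .
  qed
  have rest: "\<bar>\<Sum>\<mu>\<in>{1..M} - {l}. T \<mu>\<bar> \<le> (real M - 1) * bnd"
  proof -
    have "\<bar>\<Sum>\<mu>\<in>{1..M} - {l}. T \<mu>\<bar> \<le> (\<Sum>\<mu>\<in>{1..M} - {l}. \<bar>T \<mu>\<bar>)" by (rule sum_abs)
    also have "\<dots> \<le> (\<Sum>\<mu>\<in>{1..M} - {l}. bnd)" by (intro sum_mono Tb) auto
    also have "\<dots> = (real M - 1) * bnd" using a(12) M1 by (simp add: of_nat_diff)
    finally show ?thesis .
  qed
  have split: "(\<Sum>\<mu>\<in>{1..M}. T \<mu>) = T l + (\<Sum>\<mu>\<in>{1..M} - {l}. T \<mu>)"
    using a(12) by (simp add: sum.remove)
  have edl: "exp (real N - 2 * \<rho> * real N) \<le> exp (d l)" using dl by simp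
  have c1: "(\<Sum>\<mu>\<in>{1..M}. T \<mu>) > 0" if "\<xi>hat i = \<xi> l i"
  proof -
    have "e l = 1" using that pmh unfolding e_def by auto
    then have "T l = exp (d l) * (1 - exp (-2))" unfolding T_def by (simp add: exp_diff exp_minus field_simps)
    moreover have "exp (real N - 2 * \<rho> * real N) * (1 - exp (-2)) \<le> exp (d l) * (1 - exp (-2))"
      using edl em2 by (intro mult_right_mono) auto
    ultimately show ?thesis using split rest key by linarith
  qed
  have c2: "(\<Sum>\<mu>\<in>{1..M}. T \<mu>) < 0" if "\<xi>hat i = - \<xi> l i"
  proof -
    have "e l = -1" using that pmh unfolding e_def by auto
    then have "T l = - (exp (d l) * (exp 2 - 1))" unfolding T_def by (simp add: exp_add algebra_simps)
    moreover have "exp (real N - 2 * \<rho> * real N) * (1 - exp (-2)) \<le> exp (d l) * (exp 2 - 1)"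
    proof -
      have "1 - exp (-2) \<le> exp 2 - (1::real)" using em2p e2 by linarith
      then show ?thesis using edl em2 by (intro mult_mono) auto
    qed
    ultimately show ?thesis using split rest key by linarith
  qed
  show ?thesis unfolding Let_def xt_def[symmetric] ED using c1 c2 by blast
qed

end
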